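(* Let $k\ge1$ and let $\alpha_0,\dots,\alpha_k$, $\beta_0,\dots,\beta_{k-1}$ be real numbers with $\alpha_k=1$ and $|\alpha_0|+|\beta_0|>0$. Consider the explicit linear multistep method $\sum_{\sigma=0}^k\alpha_\sigma y_{n+\sigma}=\Delta t\sum_{\sigma=0}^{k-1}\beta_\sigma f_{n+\sigma}$ for $\dot y=f(y)$, with polynomials $\varrho(X)=\sum_{j=0}^k\alpha_jX^j$ and $\sigma(X)=\sum_{j=0}^{k-1}\beta_jX^j$. Assume the method is stable, i.e. every root of $\varrho$ has modulus $\le1$ and the roots of modulus $1$ are simple. Assume also that it is of order at least $1$, i.e. $\varrho(1)=0$ and $\varrho'(1)=\sigma(1)\neq0$. Then the stability region of the method contains no positive real number.
   Context: The stability region of the method is the set of $\mu\in\mathbb{C}$ such that every root $\zeta$ of the polynomial $\varrho(\zeta)-\mu\,\sigma(\zeta)$ satisfies $|\zeta|\le1$, and the roots with $|\zeta|=1$ are simple. Equivalently, it is the set of $\mu$ for which all solutions of $\sum_{\sigma=0}^k\alpha_\sigma x_{n+\sigma}=\mu\sum_{\sigma=0}^{k-1}\beta_\sigma x_{n+\sigma}$ are bounded. *)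

theory Defs
  imports "HOL-Analysis.Analysis" "HOL-Computational_Algebra.Polynomial"
begin

definition rho_poly :: "(nat \<Rightarrow> real) \<Rightarrow> nat \<Rightarrow> complex poly" where
  "rho_poly alpha k = (\<Sum>j\<le>k. monom (complex_of_real (alpha j)) j)"

definition sigma_poly :: "(nat \<Rightarrow> real) \<Rightarrow> nat \<Rightarrow> complex poly" where
  "sigma_poly beta k = (\<Sum>j<k. monom (complex_of_real (beta j)) j)"

definition root_condition :: "complex poly \<Rightarrow> bool" where
  "root_condition p \<longleftrightarrow>
     (\<forall>z. poly p z = 0 \<longrightarrow> cmod z \<le> 1 \<and> (cmod z = 1 \<longrightarrow> order z p = 1))"

definition stability_region :: "(nat \<Rightarrow> real) \<Rightarrow> (nat \<Rightarrow> real) \<Rightarrow> nat \<Rightarrow> complex set" where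
  "stability_region alpha beta k =
     {mu. root_condition (rho_poly alpha k - smult mu (sigma_poly beta k))}"

end

theory Submission
  imports Defs
begin

lemma ev: "poly (\<Sum>j\<le>k. monom (c j) j) (z::'a::comm_ring_1) = (\<Sum>j\<le>k. c j * z^j)"
  by (simp add: poly_sum poly_monom)
lemma ev2: "poly (\<Sum>j<k. monom (c j) j) (z::'a::comm_ring_1) = (\<Sum>j<k. c j * z^j)"
  by (simp add: poly_sum poly_monom)
lemma evd: "poly (pderiv (\<Sum>j\<le>k. monom (c j) j)) (z::'a::idom) = (\<Sum>j\<le>k. of_nat j * c j * z^(j-1))"
  by (induction k) (simp_all add: pderiv_add pderiv_monom poly_monom)
lemma co: "coeff (\<Sum>j\<le>k. monom (c j) j) n = (if n \<le> k then c n else 0)"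
  by (simp add: coeff_sum coeff_monom)
lemma co2: "coeff (\<Sum>j<k. monom (c j) j) n = (if n < k then c n else 0)"
  by (simp add: coeff_sum coeff_monom)

lemma root_exists:
  fixes p :: "real poly"
  assumes "lead_coeff p > 0" "poly p a \<le> 0"
  shows "\<exists>t\<ge>a. poly p t = 0"
proof -
  obtain n where n: "\<forall>x\<ge>n. poly p x \<ge> lead_coeff p" using poly_pinfty_gt_lc[OF assms(1)] by blast
  define T where "T = max n a"
  have "poly p T \<ge> 0" using n assms(1) unfolding T_def by (meson max.cobounded1 order.trans less_imp_le)
  moreover have "a \<le> T" unfolding T_def by simp
  ultimately obtain t where "a \<le> t" "t \<le> T" "poly p t = 0"
    using IVT[of "poly p" a 0 T] assms(2) by auto
  then show ?thesis by blast
qed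

lemma lc1:
  fixes q :: "real poly"
  assumes "\<And>n. n > k \<Longrightarrow> coeff q n = 0" "coeff q k = 1"
  shows "lead_coeff q = 1"
proof -
  have "degree q \<le> k" using assms(1) by (intro degree_le) auto
  moreover have "k \<le> degree q" using assms(2) by (intro le_degree) simp
  ultimately show ?thesis using assms(2) by simp
qed

theorem lemma2p4:
  fixes alpha beta :: "nat \<Rightarrow> real" and k :: nat
  assumes "k \<ge> 1"
    and "alpha k = 1"
    and "\<bar>alpha 0\<bar> + \<bar>beta 0\<bar> > 0"
    and "root_condition (rho_poly alpha k)"
    and "poly (rho_poly alpha k) 1 = 0"
    and "poly (pderiv (rho_poly alpha k)) 1 = poly (sigma_poly beta k) 1"
    and "poly (sigma_poly beta k) 1 \<noteq> 0"
  shows "\<forall>x::real. x > 0 \<longrightarrow> complex_of_real x \<notin> stability_region alpha beta k"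
proof (intro allI impI)
  fix x :: real assume x: "x > 0"
  define rr :: "real poly" where "rr = (\<Sum>j\<le>k. monom (alpha j) j)"
  define ss :: "real poly" where "ss = (\<Sum>j<k. monom (beta j) j)"
  have hR: "poly (rho_poly alpha k) (of_real t) = of_real (poly rr t)" for t
    unfolding rho_poly_def rr_def ev by simp
  have hS: "poly (sigma_poly beta k) (of_real t) = of_real (poly ss t)" for t
    unfolding sigma_poly_def ss_def ev2 by simp
  have hD: "poly (pderiv (rho_poly alpha k)) 1 = of_real (poly (pderiv rr) 1)"
    unfolding rho_poly_def rr_def evd by simp
  have lcr: "lead_coeff rr = 1"
    by (rule lc1[of k]) (auto simp: rr_def co assms(2))
  have rr1: "poly rr 1 = 0" using assms(5) hR[of 1] by simp
  have pos: "poly rr t > 0" if "t > 1" for t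
  proof (rule ccontr)
    assume "\<not> poly rr t > 0"
    then obtain s where s: "s \<ge> t" "poly rr s = 0" using root_exists[of rr t] lcr by auto
    have "poly (rho_poly alpha k) (of_real s) = 0" using hR s by simp
    moreover have "cmod (of_real s) > 1" using s that by simp
    ultimately show False using assms(4) unfolding root_condition_def by force
  qed
  have d: "poly (pderiv rr) 1 \<ge> 0"
  proof (rule ccontr)
    assume "\<not> poly (pderiv rr) 1 \<ge> 0"
    then obtain d where "d > 0" "\<forall>h>0. h < d \<longrightarrow> poly rr 1 > poly rr (1 + h)"
      using DERIV_neg_dec_right[OF poly_DERIV[of rr 1]] by auto
    then have "poly rr 1 > poly rr (1 + d/2)" by simp
    moreover have "poly rr (1 + d/2) > 0" using pos \<open>d > 0\<close> by simp
    ultimately show False using rr1 by simp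
  qed
  have "poly ss 1 = poly (pderiv rr) 1" using assms(6) hD hS[of 1] by simp
  moreover have "poly ss 1 \<noteq> 0" using assms(7) hS[of 1] by simp
  ultimately have s1: "poly ss 1 > 0" using d by simp
  define q where "q = rr - smult x ss"
  have lcq: "lead_coeff q = 1"
    by (rule lc1[of k]) (auto simp: q_def rr_def ss_def co co2 assms(2))
  have "poly q 1 < 0" using s1 x rr1 by (simp add: q_def)
  then obtain s where s: "s \<ge> 1" "poly q s = 0" using root_exists[of q 1] lcq by auto
  have "s \<noteq> 1" using s \<open>poly q 1 < 0\<close> by auto
  with s have s1': "s > 1" by simp
  have "poly (rho_poly alpha k - smult (of_real x) (sigma_poly beta k)) (of_real s) = 0"
    using hR[of s] hS[of s] s(2) by (simp add: q_def)
  moreover have "cmod (of_real s) > 1" using s1' by simp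
  ultimately show "complex_of_real x \<notin> stability_region alpha beta k"
    unfolding stability_region_def root_condition_def by force
qed

end
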